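(* If $b\mathbb S$ is a Hausdorff compactification of the Sorgenfrey line $\mathbb S$, then $b\mathbb S$ is not a continuous open image of the Sorgenfrey line.
   Context: $\mathbb S$ is $\mathbb R$ with the topology generated by $\{[a,b):a,b\in\mathbb R\}$; "continuous open image" means image under a continuous open surjection. *)

theory Defs
  imports "HOL-Analysis.Analysis"
begin

definition Sorgenfrey :: "real topology" where
  "Sorgenfrey = topology_generated_by {{a..<b} | a b. True}"

definition Hausdorff_compactification :: "'a topology \<Rightarrow> 'b topology \<Rightarrow> ('a \<Rightarrow> 'b) \<Rightarrow> bool" where
  "Hausdorff_compactification S X e \<longleftrightarrow>
     compact_space X \<and> Hausdorff_space X \<and> embedding_map S X e \<and>
     X closure_of (e ` topspace S) = topspace X"

end

theory Submission
  imports Defs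
begin


lemma gen_sopen:
  assumes "generate_topology_on {{a..<b} | a b. True} U"
  shows "\<forall>x\<in>U. \<exists>d>0. {x..<x+d} \<subseteq> (U::real set)"
  using assms
proof (induction rule: generate_topology_on.induct)
  case Empty then show ?case by simp
next
  case (Int a b)
  show ?case
  proof
    fix x assume "x \<in> a \<inter> b"
    then obtain d1 d2 where "d1>0" "{x..<x+d1} \<subseteq> a" "d2>0" "{x..<x+d2} \<subseteq> b"
      using Int.IH by blast
    have s1: "{x..<x+min d1 d2} \<subseteq> {x..<x+d1}" and s2: "{x..<x+min d1 d2} \<subseteq> {x..<x+d2}" by auto
    have "{x..<x+min d1 d2} \<subseteq> a" using s1 \<open>{x..<x+d1} \<subseteq> a\<close> by (rule order_trans)
    moreover have "{x..<x+min d1 d2} \<subseteq> b" using s2 \<open>{x..<x+d2} \<subseteq> b\<close> by (rule order_trans)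
    moreover have "min d1 d2 > 0" using \<open>d1>0\<close> \<open>d2>0\<close> by simp
    ultimately show "\<exists>d>0. {x..<x+d} \<subseteq> a \<inter> b" by (meson Int_greatest)
  qed
next
  case (UN K) then show ?case by blast
next
  case (Basis s)
  then obtain a b where s: "s = {a..<b}" by blast
  show ?case
  proof
    fix x assume "x \<in> s"
    then show "\<exists>d>0. {x..<x+d} \<subseteq> s" using s by (intro exI[of _ "b - x"]) auto
  qed
qed

lemma S_open: "openin Sorgenfrey U \<longleftrightarrow> (\<forall>x\<in>U. \<exists>d>0. {x..<x+d} \<subseteq> U)"
proof
  assume "openin Sorgenfrey U"
  then show "\<forall>x\<in>U. \<exists>d>0. {x..<x+d} \<subseteq> U"
    unfolding Sorgenfrey_def openin_topology_generated_by_iff by (rule gen_sopen)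
next
  assume H: "\<forall>x\<in>U. \<exists>d>0. {x..<x+d} \<subseteq> U"
  define B :: "real set set" where "B = {{a..<b} | a b. True}"
  have "U = \<Union>{I \<in> B. I \<subseteq> U}"
  proof
    show "U \<subseteq> \<Union>{I \<in> B. I \<subseteq> U}"
    proof
      fix x assume "x \<in> U"
      then obtain d where d: "d>0" "{x..<x+d} \<subseteq> U" using H by blast
      have "{x..<x+d} \<in> B" unfolding B_def by (rule CollectI, rule exI[of _ x], rule exI[of _ "x+d"], simp)
      then have "{x..<x+d} \<in> {I \<in> B. I \<subseteq> U}" using d(2) by simp
      moreover have "x \<in> {x..<x+d}" using d(1) by simp
      ultimately show "x \<in> \<Union>{I \<in> B. I \<subseteq> U}" by (rule UnionI)
    qed
  qed auto
  moreover have "generate_topology_on B (\<Union>{I \<in> B. I \<subseteq> U})"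
  proof (rule generate_topology_on.UN)
    fix k assume "k \<in> {I \<in> B. I \<subseteq> U}"
    then show "generate_topology_on B k" by (intro generate_topology_on.Basis) simp
  qed
  ultimately show "openin Sorgenfrey U"
    unfolding Sorgenfrey_def openin_topology_generated_by_iff B_def by simp
qed

lemma S_UNIV: "openin Sorgenfrey UNIV"
  unfolding S_open
proof
  fix x :: real
  show "\<exists>d>0. {x..<x+d} \<subseteq> UNIV" by (intro exI[of _ 1]) simp
qed

lemma S_topspace [simp]: "topspace Sorgenfrey = UNIV"
  using openin_subset[OF S_UNIV] by blast

lemma S_open_interval: "openin Sorgenfrey {a..<b}"
  unfolding S_open
proof
  fix x assume "x \<in> {a..<b}"
  then show "\<exists>d>0. {x..<x+d} \<subseteq> {a..<b}" by (intro exI[of _ "b - x"]) auto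
qed

lemma S_closure: "x \<in> Sorgenfrey closure_of A \<longleftrightarrow> (\<forall>d>0. \<exists>a\<in>A. x \<le> a \<and> a < x + d)"
proof
  assume a: "x \<in> Sorgenfrey closure_of A"
  show "\<forall>d>0. \<exists>a\<in>A. x \<le> a \<and> a < x + d"
  proof (intro allI impI)
    fix d :: real assume "d > 0"
    then have "x \<in> {x..<x+d}" by simp
    then obtain y where "y \<in> A" "y \<in> {x..<x+d}"
      using a S_open_interval[of x "x+d"] unfolding in_closure_of by blast
    then show "\<exists>a\<in>A. x \<le> a \<and> a < x + d" by auto
  qed
next
  assume H: "\<forall>d>0. \<exists>a\<in>A. x \<le> a \<and> a < x + d"
  show "x \<in> Sorgenfrey closure_of A"
    unfolding in_closure_of
  proof (intro conjI allI impI)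
    fix T assume "x \<in> T \<and> openin Sorgenfrey T"
    then obtain d where d: "d>0" "{x..<x+d} \<subseteq> T" by (auto simp: S_open)
    then obtain a where "a \<in> A" "x \<le> a" "a < x + d" using H by blast
    then have "a \<in> T" using d(2) by auto
    then show "\<exists>y. y \<in> A \<and> y \<in> T" using \<open>a \<in> A\<close> by blast
  qed simp
qed

lemma S_cl_atLeast: "y \<in> Sorgenfrey closure_of {x..} \<Longrightarrow> x \<le> y"
proof (rule ccontr)
  assume a: "y \<in> Sorgenfrey closure_of {x..}" and "\<not> x \<le> y"
  then have "x - y > 0" by simp
  then obtain t where "t \<in> {x..}" "t < y + (x - y)" using a unfolding S_closure by blast
  then show False by simp
qed

lemma S_cl_lessThan: "y \<in> Sorgenfrey closure_of {..<x} \<Longrightarrow> y < x"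
proof -
  assume a: "y \<in> Sorgenfrey closure_of {..<x}"
  obtain t where "t \<in> {..<x}" "y \<le> t" using a unfolding S_closure by (meson zero_less_one)
  then show ?thesis by simp
qed

lemma S_cl_interval: "y \<in> Sorgenfrey closure_of {x..<c} \<Longrightarrow> x \<le> y \<and> y < c"
proof -
  assume a: "y \<in> Sorgenfrey closure_of {x..<c}"
  have s1: "Sorgenfrey closure_of {x..<c} \<subseteq> Sorgenfrey closure_of {x..}" by (rule closure_of_mono) auto
  have s2: "Sorgenfrey closure_of {x..<c} \<subseteq> Sorgenfrey closure_of {..<c}" by (rule closure_of_mono) auto
  have "x \<le> y" using a s1 S_cl_atLeast by blast
  moreover have "y < c" using a s2 S_cl_lessThan by blast
  ultimately show ?thesis by simp
qed

lemma S_not_compact: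
  assumes "d > 0" shows "\<not> compactin Sorgenfrey {y..<y+d}"
proof
  assume c: "compactin Sorgenfrey {y..<y+d}"
  let ?U = "{{y..<t} | t. t < y+d}"
  have "\<forall>B\<in>?U. openin Sorgenfrey B" using S_open_interval by auto
  moreover have "{y..<y+d} \<subseteq> \<Union>?U"
  proof
    fix s assume "s \<in> {y..<y+d}"
    then show "s \<in> \<Union>?U" by (intro UnionI[of "{y..<(s+y+d)/2}"]) auto
  qed
  ultimately obtain F where F: "finite F" "F \<subseteq> ?U" "{y..<y+d} \<subseteq> \<Union>F"
    using c unfolding compactin_def by meson
  define tt where "tt B = (SOME t. t < y+d \<and> B = {y..<t})" for B
  have tt: "tt B < y+d \<and> B = {y..<tt B}" if "B \<in> F" for B
    using F(2) that unfolding tt_def by (smt (verit, best) mem_Collect_eq someI subsetD)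
  define m where "m = Max (insert y (tt ` F))"
  have fin: "finite (insert y (tt ` F))" using F(1) by simp
  have "m < y + d" unfolding m_def using fin tt assms by (subst Max_less_iff) auto
  have ge: "tt B \<le> m" if "B \<in> F" for B unfolding m_def using fin that by (intro Max_ge) auto
  have "y \<le> m" unfolding m_def using fin by (intro Max_ge) auto
  let ?q = "(m + y + d)/2"
  have "?q \<in> {y..<y+d}" using \<open>m < y+d\<close> \<open>y \<le> m\<close> by auto
  then obtain B where "B \<in> F" "?q \<in> B" using F(3) by blast
  then have "?q \<in> {y..<tt B}" using tt[of B] by simp
  then have "?q < tt B" by simp
  moreover have "tt B \<le> m" using ge[OF \<open>B \<in> F\<close>] .
  ultimately have "(m + y + d)/2 < m" by linarith
  then show False using \<open>m < y+d\<close> by argo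
qed



lemma S_Baire:
  assumes "countable \<C>" "\<Union>\<C> = (UNIV::real set)"
  shows "\<exists>C\<in>\<C>. \<exists>a b. a < b \<and> {a..<b} \<subseteq> Sorgenfrey closure_of C"
proof (rule ccontr)
  assume N: "\<not> ?thesis"
  define G where "G = (\<lambda>C. interior (- (Sorgenfrey closure_of C))) ` \<C>"
  have "UNIV \<subseteq> closure (\<Inter>G)"
  proof (rule Baire[OF closed_UNIV])
    show "countable G" using assms(1) G_def by simp
    fix T assume "T \<in> G"
    then obtain C where C: "C\<in>\<C>" "T = interior (- (Sorgenfrey closure_of C))" by (auto simp: G_def)
    show "openin (top_of_set UNIV) T \<and> UNIV \<subseteq> closure T"
    proof
      show "openin (top_of_set UNIV) T" using C by simp
      show "UNIV \<subseteq> closure T"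
      proof
        fix x :: real
        show "x \<in> closure T" unfolding closure_approachable
        proof (intro allI impI)
          fix d :: real assume "d > 0"
          have "x < x + d/2" using \<open>d>0\<close> by simp
          then have "\<not> {x..<x+d/2} \<subseteq> Sorgenfrey closure_of C" using N C(1) by blast
          then obtain u where u: "u \<in> {x..<x+d/2}" "u \<notin> Sorgenfrey closure_of C" by blast
          have "openin Sorgenfrey (topspace Sorgenfrey - (Sorgenfrey closure_of C))"
            by (rule openin_diff[OF openin_topspace closedin_closure_of])
          then have "openin Sorgenfrey (- (Sorgenfrey closure_of C))" by (simp add: Compl_eq_Diff_UNIV)
          then obtain \<eta> where "\<eta>>0" "{u..<u+\<eta>} \<subseteq> - (Sorgenfrey closure_of C)" using u S_open by blast
          define \<mu> where "\<mu> = min \<eta> (d/2)"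
          have "\<mu> > 0" using \<open>\<eta>>0\<close> \<open>d>0\<close> by (simp add: \<mu>_def)
          have "{u<..<u+\<mu>} \<subseteq> - (Sorgenfrey closure_of C)"
          proof -
            have "{u<..<u+\<mu>} \<subseteq> {u..<u+\<eta>}" by (auto simp: \<mu>_def)
            then show ?thesis using \<open>{u..<u+\<eta>} \<subseteq> _\<close> by blast
          qed
          then have "{u<..<u+\<mu>} \<subseteq> T" using C(2) by (simp add: interior_maximal)
          moreover have "u + \<mu>/2 \<in> {u<..<u+\<mu>}" using \<open>\<mu>>0\<close> by simp
          moreover have "dist (u + \<mu>/2) x < d"
          proof -
            have "\<mu> \<le> d/2" by (simp add: \<mu>_def)
            then show ?thesis using u \<open>\<mu>>0\<close> \<open>d>0\<close> by (simp add: dist_real_def abs_if)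
          qed
          ultimately show "\<exists>y\<in>T. dist y x < d" by blast
        qed
      qed
    qed
  qed
  then have "\<Inter>G \<noteq> {}" by auto
  then obtain z where z: "z \<in> \<Inter>G" by blast
  obtain C where C: "C\<in>\<C>" "z \<in> C" using assms(2) by blast
  then have "z \<in> Sorgenfrey closure_of C" using closure_of_subset[of C Sorgenfrey] by auto
  moreover have "z \<in> interior (- (Sorgenfrey closure_of C))" using z C(1) by (auto simp: G_def)
  ultimately show False using interior_subset by blast
qed

lemma S_dense_in:
  assumes "{a..<b} \<subseteq> Sorgenfrey closure_of C" "a \<le> u" "u < v" "v \<le> b"
  shows "\<exists>z\<in>C. u < z \<and> z < v"
proof -
  let ?t = "(u+v)/2"
  have "?t \<in> Sorgenfrey closure_of C" using assms by auto
  then obtain z where "z \<in> C" "?t \<le> z" "z < ?t + (v - u)/2"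
    using assms(3) unfolding S_closure by (meson diff_gt_0_iff_gt half_gt_zero)
  then show ?thesis using assms(3) by (intro bexI[of _ z]) (auto simp: field_simps)
qed



definition HH :: "'a topology \<Rightarrow> (real \<Rightarrow> 'a) \<Rightarrow> real \<Rightarrow> 'a set" where
  "HH X e x = X closure_of (e ` {x..})"
definition LL :: "'a topology \<Rightarrow> (real \<Rightarrow> 'a) \<Rightarrow> real \<Rightarrow> 'a set" where
  "LL X e x = X closure_of (e ` {..<x})"
definition II :: "'a topology \<Rightarrow> (real \<Rightarrow> 'a) \<Rightarrow> real \<Rightarrow> real \<Rightarrow> 'a set" where
  "II X e x c = X closure_of (e ` {x..<c})"
definition dd :: "nat \<Rightarrow> real" where "dd n = 1 / (real n + 1)"

lemma dd_pos: "dd n > 0" by (simp add: dd_def)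

lemma dd_small: "d > 0 \<Longrightarrow> \<exists>n. dd n \<le> d \<and> K \<le> real n"
proof -
  assume "d > 0"
  then obtain n1 where n1: "n1 > 0" "inverse (real n1) < d" using ex_inverse_of_nat_less by blast
  define n where "n = max n1 (nat \<lceil>K\<rceil>)"
  have "real n1 \<le> real n + 1" by (simp add: n_def)
  moreover have "real n1 > 0" using n1(1) by simp
  ultimately have "dd n \<le> 1 / (real n1)" unfolding dd_def by (simp add: frac_le)
  also have "\<dots> < d" using n1 by (simp add: inverse_eq_divide)
  finally have "dd n \<le> d" by simp
  moreover have "K \<le> real n" unfolding n_def by linarith
  ultimately show ?thesis by blast
qed

definition PA :: "'a topology \<Rightarrow> (real\<Rightarrow>'a) \<Rightarrow> (real\<Rightarrow>'a) \<Rightarrow> nat \<Rightarrow> real set" where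
  "PA X e f n = {z. \<exists>x. -real n \<le> x \<and> f z = e x \<and> f ` {z..<z + dd n} \<subseteq> HH X e x}"
definition PR :: "'a topology \<Rightarrow> (real\<Rightarrow>'a) \<Rightarrow> (real\<Rightarrow>'a) \<Rightarrow> nat \<Rightarrow> real set" where
  "PR X e f n = {z. \<exists>c. (\<forall>x<c. f z \<in> II X e x c) \<and> f ` {z..<z + dd n} \<inter> II X e c (c + dd n) = {}}"
definition PP :: "'a topology \<Rightarrow> (real\<Rightarrow>'a) \<Rightarrow> (real\<Rightarrow>'a) \<Rightarrow> real set" where
  "PP X e f = {z. \<forall>m::nat. f z \<in> LL X e (- real m)}"
definition PQ :: "'a topology \<Rightarrow> (real\<Rightarrow>'a) \<Rightarrow> (real\<Rightarrow>'a) \<Rightarrow> real set" where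
  "PQ X e f = {z. \<forall>m::nat. f z \<in> HH X e (real m)}"

context
  fixes X :: "'a topology" and e f :: "real \<Rightarrow> 'a"
  assumes cpt: "compact_space X" and haus: "Hausdorff_space X"
    and emb: "embedding_map Sorgenfrey X e"
    and dns: "X closure_of (range e) = topspace X"
    and fc: "continuous_map Sorgenfrey X f" and fo: "open_map Sorgenfrey X f"
    and fs: "range f = topspace X"
begin

lemma e_hom: "homeomorphic_map Sorgenfrey (subtopology X (range e)) e"
  using emb by (simp add: embedding_map_def)

lemma e_cont: "continuous_map Sorgenfrey X e"
proof -
  have "continuous_map Sorgenfrey (subtopology X (range e)) e"
    by (rule homeomorphic_imp_continuous_map[OF e_hom])
  then show ?thesis unfolding continuous_map_in_subtopology by (rule conjunct1)
qed

lemma e_inj: "inj e"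
proof -
  have "inj_on e (topspace Sorgenfrey)" by (rule homeomorphic_imp_injective_map[OF e_hom])
  then show ?thesis by simp
qed

lemma e_top: "e y \<in> topspace X"
proof -
  have "e ` topspace Sorgenfrey \<subseteq> topspace X" by (rule continuous_map_image_subset_topspace[OF e_cont])
  then show ?thesis by auto
qed

lemma f_top: "f z \<in> topspace X"
proof -
  have "f z \<in> range f" by (rule rangeI)
  then show ?thesis using fs by simp
qed

lemma e_open: "openin Sorgenfrey U \<Longrightarrow> \<exists>V. openin X V \<and> V \<inter> range e = e ` U"
proof -
  assume "openin Sorgenfrey U"
  then have "openin (subtopology X (range e)) (e ` U)"
    using homeomorphic_imp_open_map[OF e_hom] unfolding open_map_def by blast
  then obtain T where "openin X T" "e ` U = T \<inter> range e" unfolding openin_subtopology by blast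
  then show ?thesis by auto
qed

lemma e_cl: "e y \<in> X closure_of (e ` A) \<Longrightarrow> y \<in> Sorgenfrey closure_of A"
proof -
  assume a: "e y \<in> X closure_of (e ` A)"
  show "y \<in> Sorgenfrey closure_of A" unfolding in_closure_of
  proof (intro conjI allI impI)
    fix T assume T: "y \<in> T \<and> openin Sorgenfrey T"
    then obtain V where V: "openin X V" "V \<inter> range e = e ` T" using e_open by blast
    then have "e y \<in> V" using T by blast
    then obtain q where "q \<in> e ` A" "q \<in> V" using a V(1) unfolding in_closure_of by blast
    then obtain t where "t \<in> A" "e t \<in> e ` T" using V(2) by blast
    then show "\<exists>y. y \<in> A \<and> y \<in> T" using e_inj by (auto dest: injD)
  qed simp
qed

lemma e_cl2: "y \<in> Sorgenfrey closure_of A \<Longrightarrow> e y \<in> X closure_of (e ` A)"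
  using continuous_map_image_closure_subset[OF e_cont] by blast

lemma e_nbhd: "openin X V \<Longrightarrow> e y \<in> V \<Longrightarrow> \<exists>\<eta>>0. e ` {y..<y+\<eta>} \<subseteq> V"
proof -
  assume "openin X V" "e y \<in> V"
  then have "openin Sorgenfrey {x \<in> topspace Sorgenfrey. e x \<in> V}"
    using openin_continuous_map_preimage[OF e_cont] by blast
  then obtain \<eta> where "\<eta>>0" "{y..<y+\<eta>} \<subseteq> {x. e x \<in> V}"
    using \<open>e y \<in> V\<close> unfolding S_open by auto
  then show ?thesis by blast
qed

lemma f_nbhd: "openin X V \<Longrightarrow> f z \<in> V \<Longrightarrow> \<exists>\<eta>>0. f ` {z..<z+\<eta>} \<subseteq> V"
proof -
  assume "openin X V" "f z \<in> V"
  then have "openin Sorgenfrey {x \<in> topspace Sorgenfrey. f x \<in> V}"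
    using openin_continuous_map_preimage[OF fc] by blast
  then obtain \<eta> where "\<eta>>0" "{z..<z+\<eta>} \<subseteq> {x. f x \<in> V}"
    using \<open>f z \<in> V\<close> unfolding S_open by auto
  then show ?thesis by blast
qed

lemma f_img_open: "openin X (f ` {a..<b})"
  using fo S_open_interval unfolding open_map_def by blast

lemma open_sub_cl: "openin X V \<Longrightarrow> V \<subseteq> X closure_of (V \<inter> range e)"
proof
  fix p assume V: "openin X V" and p: "p \<in> V"
  then have pt: "p \<in> topspace X" using openin_subset by blast
  show "p \<in> X closure_of (V \<inter> range e)" unfolding in_closure_of
  proof (intro conjI allI impI pt)
    fix T assume T: "p \<in> T \<and> openin X T"
    then have "openin X (T \<inter> V)" "p \<in> T \<inter> V" using V p by auto
    moreover have "p \<in> X closure_of (range e)" using pt dns by simp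
    then have "\<forall>T. p \<in> T \<and> openin X T \<longrightarrow> (\<exists>y. y \<in> range e \<and> y \<in> T)"
      unfolding in_closure_of by simp
    ultimately obtain q where "q \<in> range e" "q \<in> T \<inter> V" by meson
    then show "\<exists>y. y \<in> V \<inter> range e \<and> y \<in> T" by blast
  qed
qed

lemma no_interior:
  assumes W: "openin X W" "W \<subseteq> range e" shows "W = {}"
proof (rule ccontr)
  assume "W \<noteq> {}"
  then obtain y where "e y \<in> W" using W(2) by blast
  have "regular_space X" using compact_Hausdorff_imp_regular_space cpt haus by blast
  then have "neighbourhood_base_of (closedin X) X" by (simp add: neighbourhood_base_of_closedin)
  then have "\<exists>U K. openin X U \<and> closedin X K \<and> e y \<in> U \<and> U \<subseteq> K \<and> K \<subseteq> W"
    using W(1) \<open>e y \<in> W\<close> unfolding neighbourhood_base_of by simp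
  then obtain U K where UK: "openin X U" "closedin X K" "e y \<in> U" "U \<subseteq> K" "K \<subseteq> W"
    by blast
  have "compactin X K" using closedin_compact_space cpt UK(2) by blast
  then have "compactin (subtopology X (range e)) K"
    using UK(5) W(2) by (simp add: compactin_subtopology)
  obtain g where g: "homeomorphic_maps Sorgenfrey (subtopology X (range e)) e g"
    using e_hom homeomorphic_map_maps by blast
  then have gc: "continuous_map (subtopology X (range e)) Sorgenfrey g" and ge: "\<And>t. g (e t) = t"
    unfolding homeomorphic_maps_def by auto
  have cK: "compactin Sorgenfrey (g ` K)"
    by (rule image_compactin[OF \<open>compactin (subtopology X (range e)) K\<close> gc])
  obtain \<eta> where "\<eta>>0" "e ` {y..<y+\<eta>} \<subseteq> U" using e_nbhd UK(1,3) by blast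
  have sub: "{y..<y+\<eta>} \<subseteq> g ` K"
  proof
    fix t assume "t \<in> {y..<y+\<eta>}"
    then have "e t \<in> K" using \<open>e ` {y..<y+\<eta>} \<subseteq> U\<close> UK(4) by blast
    then have "g (e t) \<in> g ` K" by (rule imageI)
    then show "t \<in> g ` K" using ge by simp
  qed
  have "closedin Sorgenfrey {y..<y+\<eta>}"
  proof -
    have "openin Sorgenfrey (- {y..<y+\<eta>})"
    proof -
      have "- {y..<y+\<eta>} = {..<y} \<union> {y+\<eta>..}" by auto
      moreover have "openin Sorgenfrey ({..<y} \<union> {y+\<eta>..})"
        unfolding S_open
      proof
        fix x assume x: "x \<in> {..<y} \<union> {y+\<eta>..}"
        show "\<exists>d>0. {x..<x+d} \<subseteq> {..<y} \<union> {y+\<eta>..}"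
        proof (cases "x < y")
          case True
          then show ?thesis by (intro exI[of _ "y - x"]) auto
        next
          case False
          then have "y + \<eta> \<le> x" using x by auto
          then show ?thesis by (intro exI[of _ 1]) auto
        qed
      qed
      ultimately show ?thesis by simp
    qed
    then show ?thesis by (simp add: closedin_def Compl_eq_Diff_UNIV)
  qed
  then have "compactin Sorgenfrey {y..<y+\<eta>}" using closed_compactin cK sub by blast
  then show False using S_not_compact \<open>\<eta>>0\<close> by blast
qed

lemma img_meets: "a < b \<Longrightarrow> \<exists>w y. a \<le> w \<and> w < b \<and> f w = e y"
proof -
  assume "a < b"
  have "f a \<in> f ` {a..<b}" using \<open>a<b\<close> by simp
  moreover have "f a \<in> X closure_of (range e)" using dns f_top by simp
  then have "\<forall>T. f a \<in> T \<and> openin X T \<longrightarrow> (\<exists>y. y \<in> range e \<and> y \<in> T)"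
    unfolding in_closure_of by simp
  ultimately obtain q where "q \<in> range e" "q \<in> f ` {a..<b}"
    using f_img_open[of a b] by blast
  then obtain y w where q: "q = e y" "w \<in> {a..<b}" "q = f w" by blast
  then have "f w = e y" by simp
  moreover have "a \<le> w" "w < b" using q(2) by auto
  ultimately show ?thesis by blast
qed

lemma img_misses: "a < b \<Longrightarrow> \<exists>w. a \<le> w \<and> w < b \<and> f w \<notin> range e"
proof (rule ccontr)
  assume ab: "a < b" and N: "\<not> (\<exists>w. a \<le> w \<and> w < b \<and> f w \<notin> range e)"
  have "f ` {a..<b} \<subseteq> range e"
  proof
    fix q assume "q \<in> f ` {a..<b}"
    then obtain w where "w \<in> {a..<b}" "q = f w" by blast
    moreover have "\<not> (a \<le> w \<and> w < b \<and> f w \<notin> range e)" using N by blast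
    ultimately show "q \<in> range e" by simp
  qed
  then have E: "f ` {a..<b} = {}" by (rule no_interior[OF f_img_open])
  have "a \<in> {a..<b}" using ab by simp
  then have "f a \<in> f ` {a..<b}" by (rule imageI)
  then show False using E by simp
qed

lemma HL_cover: "topspace X = HH X e x \<union> LL X e x"
proof -
  have "{x..} \<union> {..<x} = (UNIV::real set)" by auto
  moreover have "e ` ({x..} \<union> {..<x}) = e ` {x..} \<union> e ` {..<x}" by (rule image_Un)
  ultimately have "range e = e ` {x..} \<union> e ` {..<x}" by simp
  then have "X closure_of (range e) = HH X e x \<union> LL X e x" unfolding HH_def LL_def by simp
  then show ?thesis using dns by simp
qed

lemma H_mono: "x \<le> x' \<Longrightarrow> HH X e x' \<subseteq> HH X e x"
  unfolding HH_def by (intro closure_of_mono) auto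

lemma H_split: "c \<le> x \<Longrightarrow> HH X e c = II X e c x \<union> HH X e x"
proof -
  assume "c \<le> x"
  then have "{c..} = {c..<x} \<union> {x..}" by auto
  moreover have "e ` ({c..<x} \<union> {x..}) = e ` {c..<x} \<union> e ` {x..}" by (rule image_Un)
  ultimately have "e ` {c..} = e ` {c..<x} \<union> e ` {x..}" by simp
  then show ?thesis unfolding HH_def II_def by simp
qed

lemma pt_eq:
  assumes p: "p \<in> topspace X" and H: "\<forall>x>c. p \<in> II X e c x" shows "p = e c"
proof (rule ccontr)
  assume "p \<noteq> e c"
  then have H1: "e c \<in> topspace X \<and> p \<in> topspace X \<and> e c \<noteq> p" using p e_top by auto
  have HS: "\<forall>x y. x \<in> topspace X \<and> y \<in> topspace X \<and> x \<noteq> y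
              \<longrightarrow> (\<exists>U V. openin X U \<and> openin X V \<and> x \<in> U \<and> y \<in> V \<and> disjnt U V)"
    using haus by (simp add: Hausdorff_space_def)
  have "\<exists>V1 V2. openin X V1 \<and> openin X V2 \<and> e c \<in> V1 \<and> p \<in> V2 \<and> disjnt V1 V2"
    using HS[rule_format, OF H1] .
  then obtain V1 V2 where V: "openin X V1" "openin X V2" "e c \<in> V1" "p \<in> V2" "disjnt V1 V2"
    by blast
  obtain \<eta> where "\<eta>>0" "e ` {c..<c+\<eta>} \<subseteq> V1" using e_nbhd V(1,3) by blast
  have "p \<in> II X e c (c+\<eta>)" using H \<open>\<eta>>0\<close> by simp
  then have "\<forall>T. p \<in> T \<and> openin X T \<longrightarrow> (\<exists>y. y \<in> e ` {c..<c+\<eta>} \<and> y \<in> T)"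
    unfolding II_def in_closure_of by simp
  then obtain q where "q \<in> e ` {c..<c+\<eta>}" "q \<in> V2" using V(2,4) by blast
  then show False using V(5) \<open>e ` {c..<c+\<eta>} \<subseteq> V1\<close> unfolding disjnt_def by blast
qed

lemma hausd: "p \<in> topspace X \<and> q \<in> topspace X \<and> p \<noteq> q \<Longrightarrow>
    \<exists>U V. openin X U \<and> openin X V \<and> p \<in> U \<and> q \<in> V \<and> disjnt U V"
proof -
  assume H1: "p \<in> topspace X \<and> q \<in> topspace X \<and> p \<noteq> q"
  have HS: "\<forall>x y. x \<in> topspace X \<and> y \<in> topspace X \<and> x \<noteq> y
              \<longrightarrow> (\<exists>U V. openin X U \<and> openin X V \<and> x \<in> U \<and> y \<in> V \<and> disjnt U V)"
    using haus by (simp add: Hausdorff_space_def)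
  show ?thesis using HS[rule_format, OF H1] .
qed

lemma e_in_H_le: "e y \<in> HH X e x \<Longrightarrow> x \<le> y"
proof -
  assume "e y \<in> HH X e x"
  then have "y \<in> Sorgenfrey closure_of {x..}" unfolding HH_def by (rule e_cl)
  then show ?thesis by (rule S_cl_atLeast)
qed

lemma e_in_L_lt: "e y \<in> LL X e x \<Longrightarrow> y < x"
proof -
  assume "e y \<in> LL X e x"
  then have "y \<in> Sorgenfrey closure_of {..<x}" unfolding LL_def by (rule e_cl)
  then show ?thesis by (rule S_cl_lessThan)
qed

lemma cover: "z \<in> (\<Union>n. PA X e f n) \<union> (\<Union>n. PR X e f n) \<union> PP X e f \<union> PQ X e f"
proof (cases "f z \<in> range e")
  case True
  then obtain x where x: "f z = e x" by blast
  let ?V = "topspace X - LL X e x"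
  have Vo: "openin X ?V" by (rule openin_diff[OF openin_topspace]) (simp add: LL_def)
  have "e x \<notin> LL X e x" using e_in_L_lt by blast
  then have "f z \<in> ?V" using x e_top by simp
  then obtain d where d: "d>0" "f ` {z..<z+d} \<subseteq> ?V" using f_nbhd Vo by blast
  have VH: "?V \<subseteq> HH X e x" using HL_cover[of x] by blast
  obtain n where n: "dd n \<le> d" "-x \<le> real n" using dd_small[OF d(1)] by blast
  have "{z..<z+dd n} \<subseteq> {z..<z+d}" using n(1) by auto
  then have "f ` {z..<z+dd n} \<subseteq> f ` {z..<z+d}" by (rule image_mono)
  then have "f ` {z..<z+dd n} \<subseteq> HH X e x" using d(2) VH by blast
  moreover have "-real n \<le> x" using n(2) by simp
  ultimately have "z \<in> PA X e f n" unfolding PA_def using x by blast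
  then show ?thesis by blast
next
  case notE: False
  let ?p = "f z"
  have pt: "?p \<in> topspace X" by (rule f_top)
  show ?thesis
  proof (cases "\<forall>x. ?p \<in> HH X e x")
    case True
    then have "z \<in> PQ X e f" unfolding PQ_def by simp
    then show ?thesis by blast
  next
    case F1: False
    show ?thesis
    proof (cases "\<forall>x. ?p \<notin> HH X e x")
      case True
      have "?p \<in> LL X e x" for x using True HL_cover[of x] pt by blast
      then have "z \<in> PP X e f" unfolding PP_def by simp
      then show ?thesis by blast
    next
      case F2: False
      obtain x0 where x0: "?p \<in> HH X e x0" using F2 by blast
      obtain x1 where x1: "?p \<notin> HH X e x1" using F1 by blast
      define D where "D = {x. ?p \<in> HH X e x}"
      have D0: "x0 \<in> D" using x0 D_def by simp
      have Dub: "x \<le> x1" if "x \<in> D" for x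
      proof (rule ccontr)
        assume "\<not> x \<le> x1" then have "x1 \<le> x" by simp
        then have "HH X e x \<subseteq> HH X e x1" by (rule H_mono)
        moreover have "?p \<in> HH X e x" using that D_def by simp
        ultimately show False using x1 by blast
      qed
      have bdd: "bdd_above D" using Dub by (intro bdd_aboveI) 
      define c where "c = Sup D"
      have Dne: "D \<noteq> {}" using D0 by blast
      have below: "?p \<in> HH X e x" if xc: "x < c" for x
      proof -
        have "x < Sup D" using xc c_def by simp
        then obtain x' where "x' \<in> D" "x < x'" using less_cSupD[OF Dne] by blast
        then have "HH X e x' \<subseteq> HH X e x" using H_mono by simp
        then show ?thesis using \<open>x'\<in>D\<close> D_def by blast
      qed
      have above: "?p \<notin> HH X e x" if "c < x" for x
      proof
        assume "?p \<in> HH X e x" then have "x \<in> D" by (simp add: D_def)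
        then have "x \<le> c" unfolding c_def using bdd by (rule cSup_upper)
        then show False using that by simp
      qed
      have notc: "?p \<notin> HH X e c"
      proof
        assume pc: "?p \<in> HH X e c"
        have "\<forall>x>c. ?p \<in> II X e c x"
        proof (intro allI impI)
          fix x assume "c < x"
          then have "HH X e c = II X e c x \<union> HH X e x" using H_split by simp
          then show "?p \<in> II X e c x" using pc above[OF \<open>c<x\<close>] by blast
        qed
        then have "?p = e c" using pt pt_eq by blast
        then show False using notE by simp
      qed
      have left: "\<forall>x<c. ?p \<in> II X e x c"
      proof (intro allI impI)
        fix x assume "x < c"
        then have "HH X e x = II X e x c \<union> HH X e c" using H_split by simp
        then show "?p \<in> II X e x c" using below[OF \<open>x<c\<close>] notc by blast
      qed
      let ?V = "topspace X - HH X e c"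
      have Vo: "openin X ?V" by (rule openin_diff[OF openin_topspace]) (simp add: HH_def)
      have "?p \<in> ?V" using pt notc by simp
      then obtain d where d: "d>0" "f ` {z..<z+d} \<subseteq> ?V" using f_nbhd Vo by blast
      obtain n where n: "dd n \<le> d" using dd_small[OF d(1), of 0] by blast
      have "{z..<z+dd n} \<subseteq> {z..<z+d}" using n by auto
      then have "f ` {z..<z+dd n} \<subseteq> f ` {z..<z+d}" by (rule image_mono)
      then have s1: "f ` {z..<z+dd n} \<subseteq> ?V" using d(2) by (rule order_trans)
      have "c \<le> c + dd n" using dd_pos[of n] by simp
      then have "HH X e c = II X e c (c + dd n) \<union> HH X e (c + dd n)" by (rule H_split)
      then have s2: "II X e c (c + dd n) \<subseteq> HH X e c" by blast
      have "f ` {z..<z+dd n} \<inter> II X e c (c + dd n) = {}" using s1 s2 by blast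
      then have "z \<in> PR X e f n" unfolding PR_def using left by blast
      then show ?thesis by blast
    qed
  qed
qed

lemma PA_contra:
  assumes C: "C \<subseteq> PA X e f n" and ab: "a < b" "b \<le> a + dd n"
    and cl: "{a..<b} \<subseteq> Sorgenfrey closure_of C"
  shows False
proof -
  obtain w where w: "a \<le> w" "w < b" "f w \<notin> range e" using img_misses[OF ab(1)] by blast
  define xv where "xv z = inv e (f z)" for z
  have xvp: "-real n \<le> xv z \<and> f z = e (xv z) \<and> f ` {z..<z+dd n} \<subseteq> HH X e (xv z)" if zC: "z \<in> C" for z
  proof -
    have "z \<in> PA X e f n" using C zC by blast
    then obtain x where x: "-real n \<le> x" "f z = e x" "f ` {z..<z+dd n} \<subseteq> HH X e x"
      unfolding PA_def by blast
    have "xv z = x" unfolding xv_def x(2) using e_inj by (simp add: inv_f_f)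
    then show ?thesis using x by simp
  qed
  define Z where "Z = {z\<in>C. w < z \<and> z < b}"
  obtain z0 where z0: "z0 \<in> C" "w < z0" "z0 < b" using S_dense_in[OF cl w(1) w(2) order.refl] by blast
  have Zne: "Z \<noteq> {}" using z0 Z_def by blast
  have mono: "xv z \<le> xv z1" if zz: "z \<in> Z" "z1 \<in> Z" "z < z1" for z z1
  proof -
    have zC: "z \<in> C" "w < z" using zz(1) unfolding Z_def by blast+
    have z1C: "z1 \<in> C" "z1 < b" using zz(2) unfolding Z_def by blast+
    then have "z1 < z + dd n" using ab(2) w(1) zC(2) by linarith
    then have "z1 \<in> {z..<z+dd n}" using zz(3) by simp
    then have "f z1 \<in> f ` {z..<z+dd n}" by (rule imageI)
    then have "f z1 \<in> HH X e (xv z)" using xvp[OF zC(1)] by blast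
    moreover have "f z1 = e (xv z1)" using xvp[OF z1C(1)] by blast
    ultimately have "e (xv z1) \<in> HH X e (xv z)" by simp
    then show ?thesis by (rule e_in_H_le)
  qed
  define c where "c = Inf (xv ` Z)"
  have bdd: "bdd_below (xv ` Z)"
  proof (rule bdd_belowI)
    fix t assume "t \<in> xv ` Z"
    then obtain z where zz: "z \<in> Z" "t = xv z" by blast
    then have "z \<in> C" unfolding Z_def by blast
    then have "-real n \<le> xv z" using xvp by blast
    then show "-real n \<le> t" using zz(2) by simp
  qed
  have "f w = e c"
  proof (rule ccontr)
    assume ne: "f w \<noteq> e c"
    have H1: "f w \<in> topspace X \<and> e c \<in> topspace X \<and> f w \<noteq> e c" using f_top e_top ne by simp
    obtain V1 V2 where V: "openin X V1" "openin X V2" "f w \<in> V1" "e c \<in> V2" "disjnt V1 V2"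
      using hausd[OF H1] by blast
    obtain d where d: "d > 0" "f ` {w..<w+d} \<subseteq> V1" using f_nbhd V(1,3) by blast
    obtain \<eta> where \<eta>: "\<eta>>0" "e ` {c..<c+\<eta>} \<subseteq> V2" using e_nbhd V(2,4) by blast
    have i1: "Inf (xv ` Z) < c + \<eta>" using \<eta>(1) c_def by simp
    have i2: "xv ` Z \<noteq> {}" using Zne by simp
    obtain t where "t \<in> xv ` Z" "t < c+\<eta>" using cInf_lessD[OF i2 i1] by blast
    then obtain z1 where z1: "z1 \<in> Z" "xv z1 < c + \<eta>" by blast
    have z1b: "w < z1" "z1 < b" using z1(1) unfolding Z_def by blast+
    have m1: "w < min z1 (w+d)" using z1b d(1) by simp
    have m2: "min z1 (w+d) \<le> b" using z1b by simp
    obtain z where z: "z \<in> C" "w < z" "z < min z1 (w+d)" using S_dense_in[OF cl w(1) m1 m2] by blast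
    have "z < b" using z(3) z1b by simp
    then have zZ: "z \<in> Z" using z(1,2) unfolding Z_def by blast
    have "xv z \<in> xv ` Z" using zZ by (rule imageI)
    then have "c \<le> xv z" unfolding c_def using bdd by (rule cInf_lower)
    moreover have "xv z \<le> xv z1" using mono[OF zZ z1(1)] z(3) by simp
    ultimately have "xv z \<in> {c..<c+\<eta>}" using z1(2) by simp
    then have "e (xv z) \<in> V2" using \<eta>(2) by blast
    moreover have "f z = e (xv z)" using xvp[OF z(1)] by blast
    moreover have "z \<in> {w..<w+d}" using z(2,3) by simp
    then have "f z \<in> V1" using d(2) by blast
    ultimately have "f z \<in> V1 \<inter> V2" by simp
    then show False using V(5) unfolding disjnt_def by simp
  qed
  then show False using w(3) by simp
qed

lemma PR_contra:
  assumes C: "C \<subseteq> PR X e f n" and ab: "a < b" "b \<le> a + dd n"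
    and cl: "{a..<b} \<subseteq> Sorgenfrey closure_of C"
  shows False
proof -
  define \<delta> where "\<delta> = dd n"
  have \<delta>p: "\<delta> > 0" using dd_pos \<delta>_def by simp
  obtain w y where w: "a \<le> w" "w < b" "f w = e y" using img_meets[OF ab(1)] by blast
  obtain V where V: "openin X V" "V \<inter> range e = e ` {y..<y+\<delta>}" using e_open[OF S_open_interval[of y "y+\<delta>"]] by blast
  have "y \<in> {y..<y+\<delta>}" using \<delta>p by simp
  then have "e y \<in> e ` {y..<y+\<delta>}" by (rule imageI)
  then have "e y \<in> V" using V(2) by blast
  then have fwV: "f w \<in> V" using w(3) by simp
  obtain d1 where d1: "d1 > 0" "f ` {w..<w+d1} \<subseteq> V" using f_nbhd[OF V(1) fwV] by blast
  have "w \<in> {w..<b}" using w by simp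
  then have "f w \<in> f ` {w..<b}" by (rule imageI)
  then have eyw: "e y \<in> f ` {w..<b}" using w(3) by simp
  obtain \<eta> where \<eta>: "\<eta>>0" "e ` {y..<y+\<eta>} \<subseteq> f ` {w..<b}" using e_nbhd[OF f_img_open eyw] by blast
  define y' where "y' = y + min \<eta> \<delta> / 2"
  have mm: "min \<eta> \<delta> > 0" "min \<eta> \<delta> \<le> \<eta>" "min \<eta> \<delta> \<le> \<delta>" using \<eta>(1) \<delta>p by auto
  have y'1: "y < y'" "y' < y + \<eta>" "y' < y + \<delta>" using mm unfolding y'_def by linarith+
  then have "y' \<in> {y..<y+\<eta>}" by simp
  then have "e y' \<in> e ` {y..<y+\<eta>}" by (rule imageI)
  then have "e y' \<in> f ` {w..<b}" using \<eta>(2) by blast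
  then obtain w' where w': "w' \<in> {w..<b}" "e y' = f w'" by (rule imageE)
  have "w \<noteq> w'"
  proof
    assume "w = w'"
    then have "e y = e y'" using w(3) w'(2) by simp
    then have "y = y'" by (rule injD[OF e_inj])
    then show False using y'1(1) by simp
  qed
  then have ww': "w < w'" using w'(1) by simp
  define y'' where "y'' = (y + y')/2"
  have y''1: "y < y''" "y'' < y'" using y'1(1) unfolding y''_def by (simp_all add: field_simps)
  have eyH: "e y \<notin> HH X e y''"
  proof
    assume "e y \<in> HH X e y''"
    then have "y'' \<le> y" by (rule e_in_H_le)
    then show False using y''1 by simp
  qed
  let ?V3 = "topspace X - HH X e y''"
  have V3o: "openin X ?V3" by (rule openin_diff[OF openin_topspace]) (simp add: HH_def)
  have fwV3: "f w \<in> ?V3" using w(3) e_top eyH by simp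
  obtain d3 where d3: "d3 > 0" "f ` {w..<w+d3} \<subseteq> ?V3" using f_nbhd[OF V3o fwV3] by blast
  define m where "m = min w' (min (w+d1) (w+d3))"
  have m1: "w < m" using ww' d1(1) d3(1) by (simp add: m_def)
  have "m \<le> w'" by (simp add: m_def)
  then have m2: "m \<le> b" using w'(1) by simp
  obtain z where z: "z \<in> C" "w < z" "z < m" using S_dense_in[OF cl w(1) m1 m2] by blast
  have zm: "z < w'" "z < w + d1" "z < w + d3" using z(3) by (auto simp: m_def)
  have "z \<in> PR X e f n" using C z(1) by blast
  then obtain c where c1: "\<forall>x<c. f z \<in> II X e x c" and c2: "f ` {z..<z+\<delta>} \<inter> II X e c (c+\<delta>) = {}"
    unfolding PR_def \<delta>_def by blast
  have "z \<in> {w..<w+d1}" using z(2) zm(2) by simp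
  then have fzV: "f z \<in> V" using d1(2) by blast
  have "z \<in> {w..<w+d3}" using z(2) zm(3) by simp
  then have fzV3: "f z \<in> ?V3" using d3(2) by blast
  have "y < c"
  proof -
    have "f z \<in> II X e (c-1) c" using c1 by simp
    then have "\<forall>T. f z \<in> T \<and> openin X T \<longrightarrow> (\<exists>q. q \<in> e ` {c-1..<c} \<and> q \<in> T)"
      unfolding II_def in_closure_of by simp
    then have "\<exists>q. q \<in> e ` {c-1..<c} \<and> q \<in> V" using fzV V(1) by blast
    then obtain q where q: "q \<in> e ` {c-1..<c}" "q \<in> V" by blast
    then obtain t where t: "t \<in> {c-1..<c}" "q = e t" by blast
    then have "e t \<in> V \<inter> range e" using q(2) by simp
    then have "e t \<in> e ` {y..<y+\<delta>}" using V(2) by simp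
    then have "t \<in> {y..<y+\<delta>}" using inj_image_mem_iff[OF e_inj] by blast
    then show ?thesis using t(1) by simp
  qed
  have "c \<le> y''"
  proof (rule ccontr)
    assume "\<not> c \<le> y''" then have "y'' < c" by simp
    then have "f z \<in> II X e y'' c" using c1 by simp
    moreover have "II X e y'' c \<subseteq> HH X e y''" unfolding II_def HH_def by (rule closure_of_mono) auto
    ultimately show False using fzV3 by blast
  qed
  have "y' \<in> {c..<c+\<delta>}" using \<open>y<c\<close> \<open>c \<le> y''\<close> y''1 y'1 by simp
  then have "e y' \<in> e ` {c..<c+\<delta>}" by (rule imageI)
  moreover have "e ` {c..<c+\<delta>} \<subseteq> topspace X" using e_top by blast
  then have "e ` {c..<c+\<delta>} \<subseteq> X closure_of (e ` {c..<c+\<delta>})" by (rule closure_of_subset)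
  ultimately have ey': "e y' \<in> II X e c (c+\<delta>)" unfolding II_def by blast
  have "w' < z + \<delta>" using w'(1) ab(2) w(1) z(2) \<delta>_def by simp
  then have "w' \<in> {z..<z+\<delta>}" using zm(1) by simp
  then have "f w' \<in> f ` {z..<z+\<delta>}" by (rule imageI)
  then have "e y' \<in> f ` {z..<z+\<delta>}" using w'(2) by simp
  then have "e y' \<in> f ` {z..<z+\<delta>} \<inter> II X e c (c+\<delta>)" using ey' by (rule IntI)
  then show False using c2 by simp
qed

lemma PP_contra:
  assumes C: "C \<subseteq> PP X e f" and ab: "a < b" and cl: "{a..<b} \<subseteq> Sorgenfrey closure_of C"
  shows False
proof -
  obtain w y where w: "a \<le> w" "w < b" "f w = e y" using img_meets[OF ab] by blast
  have "w \<in> Sorgenfrey closure_of C" using cl w by auto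
  then have fw: "f w \<in> X closure_of (f ` C)" using continuous_map_image_closure_subset[OF fc] by blast
  define m where "m = nat \<lceil>-y\<rceil>"
  have my: "-real m \<le> y" unfolding m_def by linarith
  have "f ` C \<subseteq> LL X e (- real m)" using C unfolding PP_def by auto
  then have "X closure_of (f ` C) \<subseteq> LL X e (- real m)" by (rule closure_of_minimal) (simp add: LL_def)
  then have "e y \<in> LL X e (-real m)" using fw w(3) by auto
  then have "y < -real m" by (rule e_in_L_lt)
  then show False using my by simp
qed

lemma PQ_contra:
  assumes C: "C \<subseteq> PQ X e f" and ab: "a < b" and cl: "{a..<b} \<subseteq> Sorgenfrey closure_of C"
  shows False
proof -
  obtain w y where w: "a \<le> w" "w < b" "f w = e y" using img_meets[OF ab] by blast
  have "w \<in> Sorgenfrey closure_of C" using cl w by auto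
  then have fw: "f w \<in> X closure_of (f ` C)" using continuous_map_image_closure_subset[OF fc] by blast
  define m where "m = nat \<lceil>y\<rceil> + 1"
  have my: "y < real m" unfolding m_def by linarith
  have "f ` C \<subseteq> HH X e (real m)" using C unfolding PQ_def by auto
  then have "X closure_of (f ` C) \<subseteq> HH X e (real m)" by (rule closure_of_minimal) (simp add: HH_def)
  then have "e y \<in> HH X e (real m)" using fw w(3) by auto
  then have "real m \<le> y" by (rule e_in_H_le)
  then show False using my by simp
qed

lemma final: False
proof -
  define \<C> where "\<C> = range (PA X e f) \<union> range (PR X e f) \<union> {PP X e f, PQ X e f}"
  have cc: "countable \<C>" unfolding \<C>_def by simp
  have cu: "\<Union>\<C> = UNIV"
  proof
    show "UNIV \<subseteq> \<Union>\<C>"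
    proof
      fix z :: real
      show "z \<in> \<Union>\<C>" using cover[of z] unfolding \<C>_def by blast
    qed
  qed simp
  obtain C a b where C: "C \<in> \<C>" "a < b" "{a..<b} \<subseteq> Sorgenfrey closure_of C"
    using S_Baire[OF cc cu] by blast
  have shrink: "\<exists>b'. a < b' \<and> b' \<le> a + dd n \<and> {a..<b'} \<subseteq> Sorgenfrey closure_of C" for n
  proof (intro exI conjI)
    show "a < min b (a + dd n)" using C(2) dd_pos[of n] by simp
    show "min b (a + dd n) \<le> a + dd n" by simp
    show "{a..<min b (a + dd n)} \<subseteq> Sorgenfrey closure_of C" using C(3) by auto
  qed
  from C(1) consider (A) n where "C = PA X e f n" | (R) n where "C = PR X e f n"
    | (P) "C = PP X e f" | (Q) "C = PQ X e f" unfolding \<C>_def by blast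
  then show False
  proof cases
    case (A n)
    obtain b' where "a < b'" "b' \<le> a + dd n" "{a..<b'} \<subseteq> Sorgenfrey closure_of C" using shrink by blast
    then show False using PA_contra[of C n a b'] A by blast
  next
    case (R n)
    obtain b' where "a < b'" "b' \<le> a + dd n" "{a..<b'} \<subseteq> Sorgenfrey closure_of C" using shrink by blast
    then show False using PR_contra[of C n a b'] R by blast
  next
    case P
    then show False using PP_contra[of C a b] C by blast
  next
    case Q
    then show False using PQ_contra[of C a b] C by blast
  qed
qed

end

theorem mainTheorem15:
  fixes X :: "'a topology" and e :: "real \<Rightarrow> 'a"
  assumes "Hausdorff_compactification Sorgenfrey X e"
  shows "\<not> (\<exists>f. continuous_map Sorgenfrey X f \<and> open_map Sorgenfrey X f \<and>
               f ` topspace Sorgenfrey = topspace X)"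
proof
  assume "\<exists>f. continuous_map Sorgenfrey X f \<and> open_map Sorgenfrey X f \<and>
               f ` topspace Sorgenfrey = topspace X"
  then obtain f where f: "continuous_map Sorgenfrey X f" "open_map Sorgenfrey X f"
    "f ` topspace Sorgenfrey = topspace X" by blast
  have h: "compact_space X" "Hausdorff_space X" "embedding_map Sorgenfrey X e"
    "X closure_of (e ` topspace Sorgenfrey) = topspace X"
    using assms unfolding Hausdorff_compactification_def by auto
  have "X closure_of (range e) = topspace X" using h(4) by simp
  moreover have "range f = topspace X" using f(3) by simp
  ultimately show False using final[OF h(1,2,3) _ f(1,2)] by blast
qed

end
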